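(* Let $p$ be a prime and $q$ a power of $p$. Let $s,b$ be integers with $1\le s\le b<q$, let $L=\{b-s+1,b-s+2,\ldots,b\}$, and assume $p\nmid\binom{b}{s}$. If $\mathcal{F}\subseteq 2^{[n]}$ is $q$-modular $L$-differencing Sperner, then $$|\mathcal{F}|\le\sum_{i=0}^{s}\binom{n-1}{i}.$$
   Context: $[n]=\{1,\ldots,n\}$ and $2^{[n]}$ is the family of all subsets of $[n]$. For a positive integer $m$ and $L\subseteq\mathbb{Z}$, write $r\in L\pmod m$ if $r\equiv \ell\pmod m$ for some $\ell\in L$. For $L\subseteq[q-1]$, a family $\mathcal{F}\subseteq 2^{[n]}$ is $q$-modular $L$-differencing Sperner if $|A\setminus B|\in L\pmod q$ for all distinct $A,B\in\mathcal{F}$. *)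

theory Defs
  imports "HOL-Computational_Algebra.Primes"
begin

definition mod_in :: "nat \<Rightarrow> nat set \<Rightarrow> nat \<Rightarrow> bool" where
  "mod_in m L r \<longleftrightarrow> (\<exists>l\<in>L. r mod m = l mod m)"

definition modular_L_differencing_Sperner ::
  "nat \<Rightarrow> nat set \<Rightarrow> nat \<Rightarrow> nat set set \<Rightarrow> bool" where
  "modular_L_differencing_Sperner q L n F \<longleftrightarrow>
     F \<subseteq> Pow {1..n} \<and>
     (\<forall>A\<in>F. \<forall>B\<in>F. A \<noteq> B \<longrightarrow> mod_in q L (card (A - B)))"

end

theory Submission
  imports Defs "Jordan_Normal_Form.Determinant"
begin


lemma pdvd_choose_pow:
  assumes p: "prime p" and j: "0 < j" "j < p ^ k"
  shows "p dvd (p ^ k choose j)"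
proof (rule ccontr)
  assume nd: "\<not> p dvd (p ^ k choose j)"
  have "coprime p (p ^ k choose j)" using p nd by (simp add: prime_imp_coprime)
  hence cop: "coprime (p ^ k) (p ^ k choose j)" by simp
  have "j * (p ^ k choose j) = p ^ k * ((p ^ k - 1) choose (j - 1))"
    using times_binomial_minus1_eq[OF j(1)] by simp
  hence "p ^ k dvd j * (p ^ k choose j)" by simp
  hence "p ^ k dvd j" using cop by (simp add: coprime_dvd_mult_left_iff)
  hence "p ^ k \<le> j" using j(1) by (simp add: dvd_imp_le)
  thus False using j(2) by simp
qed

lemma luc:
  assumes p: "prime p" and s: "s < p ^ k"
  shows "((p ^ k * K + r) choose s) mod p = (r choose s) mod p"
proof (induction K)
  case 0 then show ?case by simp
next
  case (Suc K)
  let ?q = "p ^ k"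
  define R where "R = (\<Sum>j\<in>{1..s}. (?q choose j) * ((?q * K + r) choose (s - j)))"
  have e0: "?q * Suc K + r = ?q + (?q * K + r)" by simp
  have eq: "(?q * Suc K + r) choose s = (\<Sum>j\<le>s. (?q choose j) * ((?q * K + r) choose (s - j)))"
    unfolding e0 by (rule vandermonde[symmetric])
  have "{..s} = insert 0 {1..s}" by auto
  hence "(\<Sum>j\<le>s. (?q choose j) * ((?q * K + r) choose (s - j)))
      = (?q choose 0) * ((?q * K + r) choose (s - 0)) + R"
    unfolding R_def by (simp only: sum.insert finite_atLeastAtMost) simp
  hence eq2: "(?q * Suc K + r) choose s = ((?q * K + r) choose s) + R" unfolding eq by simp
  have "p dvd R" unfolding R_def
    by (rule dvd_sum) (use pdvd_choose_pow[OF p] s in auto)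
  then obtain m where m: "R = p * m" by blast
  have "((?q * Suc K + r) choose s) mod p = ((?q * K + r) choose s) mod p"
    unfolding eq2 m by simp
  thus ?case using Suc.IH by simp
qed



lemma mult_compl:
  fixes p x k :: nat
  assumes p: "prime p" and x: "0 < x" "x < p ^ k"
  shows "multiplicity p (p ^ k - x) = multiplicity p x"
proof -
  have xn: "x \<noteq> 0" using x by simp
  have nu: "\<not> is_unit p" using p not_prime_unit by blast
  obtain u where u: "x = p ^ multiplicity p x * u" "\<not> p dvd u"
    using multiplicity_decompose'[OF xn nu] by metis
  define v where "v = multiplicity p x"
  have up: "u > 0" using u xn by (cases u) auto
  have "p ^ v \<le> x" using u(1) up unfolding v_def by (metis dvd_imp_le dvd_triv_left x(1))
  hence "p ^ v < p ^ k" using x by simp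
  hence vk: "v < k" using p by (simp add: prime_gt_Suc_0_nat power_less_imp_less_exp)
  have pk: "p ^ k = p ^ v * p ^ (k - v)" using vk by (metis le_add_diff_inverse less_imp_le power_add)
  have xv: "x = p ^ v * u" using u(1) unfolding v_def .
  have eq: "p ^ k - x = p ^ v * (p ^ (k - v) - u)" unfolding xv by (subst pk) (rule diff_mult_distrib2[symmetric])
  have nd: "\<not> p dvd (p ^ (k - v) - u)"
  proof
    assume d: "p dvd (p ^ (k - v) - u)"
    have pu: "p ^ (k - v) > u"
    proof -
      have "x < p ^ v * p ^ (k-v)" using x pk by simp
      thus ?thesis using u(1) unfolding v_def[symmetric] by (simp)
    qed
    have "p dvd p ^ (k - v)" using vk by (simp add: dvd_power)
    hence "p dvd p ^ (k - v) - (p ^ (k - v) - u)" using d by (simp add: dvd_diff_nat)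
    hence "p dvd u" using pu by simp
    thus False using u(2) by simp
  qed
  have "multiplicity p (p ^ k - x) = v"
    by (rule multiplicity_decomposeI[OF eq nd]) (use p in simp)
  thus ?thesis unfolding v_def .
qed

lemma choose_prod:
  "((r + s) choose s) * fact s = (\<Prod>i\<in>{1..s}. r + i)"
proof (induction s)
  case 0 then show ?case by simp
next
  case (Suc s)
  have "Suc s * (Suc (r + s) choose Suc s) = Suc (r + s) * ((r + s) choose s)"
    by (rule Suc_times_binomial)
  hence "((r + Suc s) choose Suc s) * fact (Suc s) = (r + Suc s) * (((r + s) choose s) * fact s)"
  proof -
    assume h: "Suc s * (Suc (r + s) choose Suc s) = Suc (r + s) * ((r + s) choose s)"
    have "((r + Suc s) choose Suc s) * fact (Suc s) = (Suc s * (Suc (r + s) choose Suc s)) * fact s"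
      by (simp only: fact_Suc add_Suc_right of_nat_id) (simp only: mult_ac)
    also have "\<dots> = (r + Suc s) * (((r + s) choose s) * fact s)" using h by (metis add_Suc_right mult.assoc)
    finally show ?thesis .
  qed
  also have "\<dots> = (\<Prod>i\<in>{1..Suc s}. r + i)" using Suc.IH by (simp add: prod.cl_ivl_Suc mult.commute)
  finally show ?case .
qed

lemma mult_nat_prod:
  fixes p :: nat and f :: "nat \<Rightarrow> nat"
  assumes p: "prime p" and nz: "\<And>i. i \<in> A \<Longrightarrow> f i \<noteq> 0" and fin: "finite A"
  shows "multiplicity p (\<Prod>i\<in>A. f i) = (\<Sum>i\<in>A. multiplicity p (f i))"
proof -
  have z: "0 \<notin> f ` A" using nz by force
  show ?thesis by (rule prime_elem_multiplicity_prod_distrib[OF prime_imp_prime_elem[OF p] z fin])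
qed

lemma nz_lemma:
  fixes p k s b :: nat
  assumes p: "prime p" and sb: "s \<le> b" and bq: "b < p ^ k"
    and nd: "\<not> p dvd (b choose s)"
  shows "\<not> p dvd ((p ^ k + s - 1 - b) choose s)"
proof -
  define r where "r = p ^ k - 1 - b"
  define b' where "b' = b - s"
  have rs: "p ^ k + s - 1 - b = r + s" using bq unfolding r_def by simp
  have bb: "b = b' + s" using sb unfolding b'_def by simp
  have nu: "\<not> is_unit p" using p not_prime_unit by blast
  have fz: "fact s \<noteq> (0::nat)" by simp
  have c1: "(r + s) choose s \<noteq> 0" by simp
  have c2: "b choose s \<noteq> 0" using sb by simp
  have A1: "multiplicity p ((r + s) choose s) + multiplicity p (fact s :: nat) = (\<Sum>i\<in>{1..s}. multiplicity p (r + i))"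
  proof -
    have "multiplicity p (((r + s) choose s) * fact s) = (\<Sum>i\<in>{1..s}. multiplicity p (r + i))"
      unfolding choose_prod by (rule mult_nat_prod[OF p]) auto
    thus ?thesis using prime_elem_multiplicity_mult_distrib[OF prime_imp_prime_elem[OF p] c1 fz] by simp
  qed
  have A2: "multiplicity p (b choose s) + multiplicity p (fact s :: nat) = (\<Sum>i\<in>{1..s}. multiplicity p (b' + i))"
  proof -
    have "multiplicity p (((b' + s) choose s) * fact s) = (\<Sum>i\<in>{1..s}. multiplicity p (b' + i))"
      unfolding choose_prod by (rule mult_nat_prod[OF p]) auto
    thus ?thesis using prime_elem_multiplicity_mult_distrib[OF prime_imp_prime_elem[OF p] c2 fz] bb by simp
  qed
  have "(\<Sum>i\<in>{1..s}. multiplicity p (r + i)) = (\<Sum>i\<in>{1..s}. multiplicity p (b + 1 - i))"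
  proof (rule sum.cong[OF refl])
    fix i assume i: "i \<in> {1..s}"
    have "r + i = p ^ k - (b + 1 - i)" using i sb bq unfolding r_def by auto
    thus "multiplicity p (r + i) = multiplicity p (b + 1 - i)"
      using mult_compl[OF p, of "b + 1 - i" k] i sb bq by auto
  qed
  also have "\<dots> = (\<Sum>i\<in>{1..s}. multiplicity p (b' + i))"
  proof -
    have "(\<Sum>i\<in>{1..s}. multiplicity p (b' + i)) = (\<Sum>i\<in>{1..s}. multiplicity p (b' + (s + 1 - i)))"
      by (rule sum.atLeastAtMost_rev)
    also have "\<dots> = (\<Sum>i\<in>{1..s}. multiplicity p (b + 1 - i))"
      by (rule sum.cong[OF refl]) (use bb in auto)
    finally show ?thesis by simp
  qed
  finally have "multiplicity p ((r + s) choose s) = multiplicity p (b choose s)" using A1 A2 by simp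
  also have "\<dots> = 0" using multiplicity_eq_zero_iff[OF c2 nu] nd by simp
  finally show ?thesis using multiplicity_eq_zero_iff[OF c1 nu] rs by simp
qed



lemma SL:
  fixes g :: "nat \<Rightarrow> nat"
  assumes fin: "finite X"
  shows "(\<Sum>T\<in>{T. T \<subseteq> X \<and> card T \<le> s}. g (card T)) = (\<Sum>k\<le>s. (card X choose k) * g k)"
proof (induction s)
  case 0
  have "{T. T \<subseteq> X \<and> card T \<le> 0} = {{}}" using fin by (auto simp: card_eq_0_iff dest: finite_subset)
  then show ?case by simp
next
  case (Suc s)
  have split: "{T. T \<subseteq> X \<and> card T \<le> Suc s} = {T. T \<subseteq> X \<and> card T \<le> s} \<union> {T. T \<subseteq> X \<and> card T = Suc s}"
    by auto
  have f1: "finite {T. T \<subseteq> X \<and> card T \<le> s}" using fin by auto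
  have f2: "finite {T. T \<subseteq> X \<and> card T = Suc s}" using fin by auto
  have "(\<Sum>T\<in>{T. T \<subseteq> X \<and> card T = Suc s}. g (card T)) = (\<Sum>T\<in>{T. T \<subseteq> X \<and> card T = Suc s}. g (Suc s))"
    by (rule sum.cong) auto
  also have "\<dots> = (card X choose Suc s) * g (Suc s)" using n_subsets[OF fin, of "Suc s"] by simp
  finally have e: "(\<Sum>T\<in>{T. T \<subseteq> X \<and> card T = Suc s}. g (card T)) = (card X choose Suc s) * g (Suc s)" .
  have "(\<Sum>T\<in>{T. T \<subseteq> X \<and> card T \<le> Suc s}. g (card T)) =
     (\<Sum>T\<in>{T. T \<subseteq> X \<and> card T \<le> s}. g (card T)) + (\<Sum>T\<in>{T. T \<subseteq> X \<and> card T = Suc s}. g (card T))"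
    unfolding split by (rule sum.union_disjoint[OF f1 f2]) auto
  then show ?case using Suc.IH e by simp
qed

lemma expand:
  assumes fin: "finite X"
  shows "(card X + c) choose s = (\<Sum>T\<in>{T. T \<subseteq> X \<and> card T \<le> s}. c choose (s - card T))"
  using SL[OF fin, where s=s and g="\<lambda>k. c choose (s - k)"] vandermonde[where r=s and m="card X" and n=c] by simp

lemma Z1:
  fixes p k s b t l K :: nat
  assumes p: "prime p" and bq: "b < p ^ k" and tK: "t \<le> K"
    and l: "t mod p ^ k = l" "b - s + 1 \<le> l" "l \<le> b" and s1: "1 \<le> s" and sb: "s \<le> b"
  shows "p dvd ((p ^ k * K + b - t) choose s)"
proof -
  let ?q = "p ^ k"
  define a where "a = t div ?q"
  have t: "t = ?q * a + l" using l(1) div_mult_mod_eq[of t ?q] unfolding a_def by (simp add: mult.commute)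
  have "?q * a \<le> K" using t tK by simp
  moreover have "1 \<le> ?q" using p by (simp add: prime_gt_0_nat Suc_leI)
  hence "a \<le> ?q * a" using mult_le_mono1[of 1 ?q a] by simp
  ultimately have aK: "a \<le> K" by linarith
  have e: "?q * K + b - t = ?q * (K - a) + (b - l)"
    using t aK l(3) by (simp add: diff_mult_distrib2 algebra_simps)
  have sq: "s < ?q" using sb bq by simp
  have "((?q * (K - a) + (b - l)) choose s) mod p = ((b - l) choose s) mod p" by (rule luc[OF p sq])
  also have "(b - l) choose s = 0" using l s1 by simp
  finally show ?thesis unfolding e by (simp add: dvd_eq_mod_eq_0)
qed

lemma Z2:
  fixes p k s b t l :: nat
  assumes p: "prime p" and bq: "b < p ^ k" and sb: "s \<le> b"
    and l: "t mod p ^ k = l" "b - s + 1 \<le> l" "l \<le> b" and s1: "1 \<le> s"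
  shows "p dvd ((t + (p ^ k + s - 1 - b)) choose s)"
proof -
  let ?q = "p ^ k"
  define a where "a = t div ?q"
  have t: "t = ?q * a + l" using l(1) div_mult_mod_eq[of t ?q] unfolding a_def by (simp add: mult.commute)
  have e: "t + (?q + s - 1 - b) = ?q * (Suc a) + (l + s - 1 - b)"
    using t l bq sb by simp
  have sq: "s < ?q" using sb bq by simp
  have "((?q * Suc a + (l + s - 1 - b)) choose s) mod p = ((l + s - 1 - b) choose s) mod p" by (rule luc[OF p sq])
  also have "(l + s - 1 - b) choose s = 0" using l s1 by simp
  finally show ?thesis unfolding e by (simp add: dvd_eq_mod_eq_0)
qed



lemma sum_nth_set:
  assumes "distinct ts"
  shows "(\<Sum>k\<in>{0..<length ts}. g (ts ! k)) = (\<Sum>T\<in>set ts. g T)"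
proof -
  have "bij_betw ((!) ts) {..<length ts} (set ts)" by (rule bij_betw_nth[OF assms refl refl])
  hence "(\<Sum>T\<in>set ts. g T) = (\<Sum>k\<in>{..<length ts}. g (ts ! k))"
    by (simp add: sum.reindex_bij_betw[symmetric])
  thus ?thesis by (simp add: atLeast0LessThan)
qed

lemma rank_bound:
  fixes F :: "'a set" and TS :: "'b set" and u :: "'a \<Rightarrow> 'b \<Rightarrow> int" and v :: "'b \<Rightarrow> 'a \<Rightarrow> int"
    and p :: int
  assumes finF: "finite F" and finT: "finite TS" and p: "prime p"
    and diag: "\<And>A. A \<in> F \<Longrightarrow> \<not> p dvd (\<Sum>T\<in>TS. u A T * v T A)"
    and off: "\<And>A B. A \<in> F \<Longrightarrow> B \<in> F \<Longrightarrow> A \<noteq> B \<Longrightarrow> p dvd (\<Sum>T\<in>TS. u A T * v T B)"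
  shows "card F \<le> card TS"
proof (rule ccontr)
  assume con: "\<not> card F \<le> card TS"
  obtain xs where xs: "distinct xs" "set xs = F" using finite_distinct_list[OF finF] by metis
  obtain ts where ts: "distinct ts" "set ts = TS" using finite_distinct_list[OF finT] by metis
  define N where "N = length xs"
  define M where "M = length ts"
  have NF: "N = card F" using xs distinct_card unfolding N_def by metis
  have MT: "M = card TS" using ts distinct_card unfolding M_def by metis
  have MN: "M < N" using con NF MT by simp
  define U :: "int mat" where "U = mat N N (\<lambda>(i,j). if j < M then u (xs ! i) (ts ! j) else 0)"
  define V :: "int mat" where "V = mat N N (\<lambda>(i,j). if i < M then v (ts ! i) (xs ! j) else 0)"
  define P where "P = U * V"
  have Uc: "U \<in> carrier_mat N N" and Vc: "V \<in> carrier_mat N N" unfolding U_def V_def by auto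
  have Pc: "P \<in> carrier_mat N N" unfolding P_def using Uc Vc by auto
  have Pij: "P $$ (i,j) = (\<Sum>T\<in>TS. u (xs ! i) T * v T (xs ! j))" if i: "i < N" and j: "j < N" for i j
  proof -
    have "P $$ (i,j) = (\<Sum>k\<in>{0..<N}. U $$ (i,k) * V $$ (k,j))"
      unfolding P_def using i j Uc Vc by (simp add: scalar_prod_def)
    also have "\<dots> = (\<Sum>k\<in>{0..<N}. if k < M then u (xs ! i) (ts ! k) * v (ts ! k) (xs ! j) else 0)"
      by (rule sum.cong[OF refl]) (use i j in \<open>auto simp: U_def V_def\<close>)
    also have "\<dots> = (\<Sum>k\<in>{0..<M}. u (xs ! i) (ts ! k) * v (ts ! k) (xs ! j))"
      by (rule sum.mono_neutral_cong_right) (use MN in auto)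
    also have "\<dots> = (\<Sum>T\<in>TS. u (xs ! i) T * v T (xs ! j))"
      using sum_nth_set[OF ts(1)] ts(2) unfolding M_def by simp
    finally show ?thesis .
  qed
  have dU: "det U = 0"
  proof -
    have "signof \<pi> * (\<Prod>i = 0..<N. U $$ (i, \<pi> i)) = 0" if pi: "\<pi> permutes {0..<N}" for \<pi>
    proof -
      have "N - 1 \<in> \<pi> ` {0..<N}" using permutes_image[OF pi] MN by auto
      then obtain i where i: "i < N" "\<pi> i = N - 1" by auto
      have "U $$ (i, \<pi> i) = 0" using i MN unfolding U_def by auto
      hence "(\<Prod>i = 0..<N. U $$ (i, \<pi> i)) = 0" using i(1) by (intro prod_zero) auto
      thus ?thesis by simp
    qed
    thus ?thesis unfolding det_def'[OF Uc] by (intro sum.neutral) auto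
  qed
  have "det P = det U * det V" unfolding P_def by (rule det_mult[OF Uc Vc])
  hence dP0: "det P = 0" using dU by simp
  define S where "S = {\<pi>. \<pi> permutes {0..<N}}"
  define trm where "trm = (\<lambda>\<pi>. signof \<pi> * (\<Prod>i = 0..<N. P $$ (i, \<pi> i)) :: int)"
  have finS: "finite S" unfolding S_def by (simp add: finite_permutations)
  have idS: "id \<in> S" unfolding S_def by (simp add: permutes_id)
  have "det P = trm id + (\<Sum>\<pi>\<in>S - {id}. trm \<pi>)"
    unfolding det_def'[OF Pc] trm_def[symmetric] S_def[symmetric] using sum.remove[OF finS idS] by simp
  moreover have "p dvd (\<Sum>\<pi>\<in>S - {id}. trm \<pi>)"
  proof (rule dvd_sum)
    fix \<pi> assume pi: "\<pi> \<in> S - {id}"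
    hence pp: "\<pi> permutes {0..<N}" and ne: "\<pi> \<noteq> id" unfolding S_def by auto
    obtain i where i: "\<pi> i \<noteq> i" using ne by (metis eq_id_iff)
    have iN: "i < N" using i pp by (metis atLeastLessThan_iff permutes_def)
    have piN: "\<pi> i < N" using permutes_in_image[OF pp] iN by auto
    have "xs ! i \<noteq> xs ! (\<pi> i)" using xs(1) iN piN i unfolding N_def by (simp add: nth_eq_iff_index_eq)
    hence "p dvd P $$ (i, \<pi> i)" unfolding Pij[OF iN piN] using off xs(2) iN piN unfolding N_def
      by (metis nth_mem)
    hence "p dvd (\<Prod>i = 0..<N. P $$ (i, \<pi> i))" using iN by (meson atLeastLessThan_iff dvd_prodI dvd_trans finite_atLeastLessThan zero_le)
    thus "p dvd trm \<pi>" unfolding trm_def by simp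
  qed
  moreover have "\<not> p dvd trm id"
  proof
    assume "p dvd trm id"
    hence "p dvd (\<Prod>i = 0..<N. P $$ (i, i))" unfolding trm_def by simp
    hence "\<exists>i\<in>{0..<N}. p dvd P $$ (i, i)" by (simp only: prime_dvd_prod_iff[OF finite_atLeastLessThan p])
    then obtain i where i: "i \<in> {0..<N}" "p dvd P $$ (i, i)" by blast
    hence "p dvd (\<Sum>T\<in>TS. u (xs ! i) T * v T (xs ! i))" using Pij[of i i] by simp
    moreover have "xs ! i \<in> F" using i xs(2) unfolding N_def by auto
    ultimately show False using diag by blast
  qed
  ultimately show False
  proof -
    assume e: "det P = trm id + (\<Sum>\<pi>\<in>S - {id}. trm \<pi>)" and d1: "p dvd (\<Sum>\<pi>\<in>S - {id}. trm \<pi>)"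
      and d2: "\<not> p dvd trm id"
    have "p dvd (\<Sum>\<pi>\<in>S - {id}. trm \<pi>) + trm id" using e dP0 by (simp add: add.commute)
    hence "p dvd trm id" using dvd_add_right_iff[OF d1] by blast
    thus False using d2 by blast
  qed
qed

lemma card_TS:
  fixes n s :: nat
  shows "card {T. T \<subseteq> {1..n} - {n} \<and> card T \<le> s} = (\<Sum>i=0..s. (n - 1) choose i)"
proof -
  have cW: "card ({1..n} - {n}) = n - 1" by (cases n) auto
  have "card {T. T \<subseteq> {1..n} - {n} \<and> card T \<le> s} = (\<Sum>T\<in>{T. T \<subseteq> {1..n} - {n} \<and> card T \<le> s}. (\<lambda>_. 1::nat) (card T))"
    by simp
  also have "\<dots> = (\<Sum>k\<le>s. (card ({1..n} - {n}) choose k) * 1)" by (rule SL) simp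
  finally show ?thesis using cW by (simp add: atMost_atLeast0)
qed

theorem mainTheorem1:
  fixes p q s b n :: nat and F :: "nat set set"
  assumes "prime p"
    and "\<exists>k. q = p ^ k"
    and "1 \<le> s" and "s \<le> b" and "b < q"
    and "\<not> p dvd (b choose s)"
    and "modular_L_differencing_Sperner q {b - s + 1..b} n F"
  shows "card F \<le> (\<Sum>i=0..s. (n - 1) choose i)"
proof -
  note p = assms(1) and s1 = assms(3) and sb = assms(4) and bq = assms(5) and nd = assms(6)
  obtain k where qk: "q = p ^ k" using assms(2) by blast
  have FP: "F \<subseteq> Pow {1..n}" and md: "\<And>A B. A \<in> F \<Longrightarrow> B \<in> F \<Longrightarrow> A \<noteq> B \<Longrightarrow> mod_in q {b - s + 1..b} (card (A - B))"
    using assms(7) unfolding modular_L_differencing_Sperner_def by auto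
  have finF: "finite F" using FP finite_subset by (metis finite_Pow_iff finite_atLeastAtMost)
  have q1: "1 \<le> q" using bq by simp
  have modl: "\<exists>l. t mod q = l \<and> b - s + 1 \<le> l \<and> l \<le> b" if mi: "mod_in q {b - s + 1..b} t" for t
  proof -
    obtain l where l: "l \<in> {b - s + 1..b}" "t mod q = l mod q" using mi unfolding mod_in_def by blast
    have "l mod q = l" using l bq by simp
    thus ?thesis using l by auto
  qed
  define W where "W = {1..n} - {n}"
  define TS where "TS = {T. T \<subseteq> W \<and> card T \<le> s}"
  define d where "d = q + s - 1 - b"
  define X where "X = (\<lambda>A::nat set. if n \<in> A then {1..n} - A else A)"
  define c where "c = (\<lambda>A::nat set. if n \<in> A then d else q * card A + b - card A)"
  define u where "u = (\<lambda>A T. int (if T \<subseteq> X A then c A choose (s - card T) else 0))"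
  define v where "v = (\<lambda>T (B::nat set). if T \<subseteq> B then (1::int) else 0)"
  have finT: "finite TS" unfolding TS_def W_def by simp
  have XW: "X A \<subseteq> W" if "A \<subseteq> {1..n}" for A using that unfolding X_def W_def by auto
  have key: "(\<Sum>T\<in>TS. u A T * v T B) = int ((card (X A \<inter> B) + c A) choose s)"
    if A: "A \<subseteq> {1..n}" and B: "B \<subseteq> {1..n}" for A B
  proof -
    have finX: "finite (X A \<inter> B)" using B by (meson finite_Int finite_atLeastAtMost finite_subset)
    have "(\<Sum>T\<in>TS. u A T * v T B) = (\<Sum>T\<in>TS. int (if T \<subseteq> X A \<inter> B then c A choose (s - card T) else 0))"
      by (rule sum.cong) (auto simp: u_def v_def)
    also have "\<dots> = int (\<Sum>T\<in>TS. (if T \<subseteq> X A \<inter> B then c A choose (s - card T) else 0))"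
      by simp
    also have "(\<Sum>T\<in>TS. (if T \<subseteq> X A \<inter> B then c A choose (s - card T) else 0)) =
        (\<Sum>T\<in>{T\<in>TS. T \<subseteq> X A \<inter> B}. c A choose (s - card T))"
      by (rule sum.inter_filter[OF finT, symmetric])
    also have "{T\<in>TS. T \<subseteq> X A \<inter> B} = {T. T \<subseteq> X A \<inter> B \<and> card T \<le> s}"
      using XW[OF A] unfolding TS_def by auto
    also have "(\<Sum>T\<in>{T. T \<subseteq> X A \<inter> B \<and> card T \<le> s}. c A choose (s - card T)) = (card (X A \<inter> B) + c A) choose s"
      by (rule expand[OF finX, symmetric])
    finally show ?thesis .
  qed
  have sq: "s < p ^ k" using sb bq qk by simp
  have diag: "\<not> int p dvd (\<Sum>T\<in>TS. u A T * v T A)" if A: "A \<in> F" for A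
  proof -
    have As: "A \<subseteq> {1..n}" using A FP by auto
    show ?thesis
    proof (cases "n \<in> A")
      case True
      have "X A \<inter> A = {}" using True unfolding X_def by auto
      hence "(\<Sum>T\<in>TS. u A T * v T A) = int (d choose s)" using key[OF As As] True unfolding c_def by simp
      moreover have "\<not> p dvd (d choose s)" unfolding d_def qk by (rule nz_lemma[OF p sb bq[unfolded qk] nd])
      ultimately show ?thesis by simp
    next
      case False
      have "X A \<inter> A = A" using False unfolding X_def by auto
      moreover have "card A + (q * card A + b - card A) = q * card A + b" using q1
        by (simp add: le_add1 order_trans[OF _ le_add1] mult_le_mono1)
      ultimately have "(\<Sum>T\<in>TS. u A T * v T A) = int ((p ^ k * card A + b) choose s)"
        using key[OF As As] False qk unfolding c_def by simp
      moreover have "\<not> p dvd ((p ^ k * card A + b) choose s)"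
        using luc[OF p sq, of "card A" b] nd by (simp add: dvd_eq_mod_eq_0)
      ultimately show ?thesis by simp
    qed
  qed
  have off: "int p dvd (\<Sum>T\<in>TS. u A T * v T B)" if A: "A \<in> F" and B: "B \<in> F" and ne: "A \<noteq> B" for A B
  proof -
    have As: "A \<subseteq> {1..n}" and Bs: "B \<subseteq> {1..n}" using A B FP by auto
    have finA: "finite A" using As finite_subset by blast
    show ?thesis
    proof (cases "n \<in> A")
      case True
      have "X A \<inter> B = B - A" using True Bs unfolding X_def by auto
      hence "(\<Sum>T\<in>TS. u A T * v T B) = int ((card (B - A) + (p ^ k + s - 1 - b)) choose s)"
        using key[OF As Bs] True qk unfolding c_def d_def by simp
      moreover obtain l where "card (B - A) mod q = l" "b - s + 1 \<le> l" "l \<le> b" using modl[OF md[OF B A ne[symmetric]]] by blast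
      ultimately show ?thesis using Z2[OF p bq[unfolded qk] sb _ _ _ s1] qk by simp
    next
      case False
      have XA: "X A \<inter> B = A \<inter> B" using False unfolding X_def by auto
      have cA: "card A = card (A \<inter> B) + card (A - B)"
      proof -
        have "A = (A \<inter> B) \<union> (A - B)" by auto
        hence "card A = card ((A \<inter> B) \<union> (A - B))" by simp
        also have "\<dots> = card (A \<inter> B) + card (A - B)" by (rule card_Un_disjoint) (use finA in auto)
        finally show ?thesis .
      qed
      have le: "card A \<le> q * card A" using q1 by simp
      have "card (A \<inter> B) + (q * card A + b - card A) = q * card A + b - card (A - B)" using cA le
        by linarith
      hence "(\<Sum>T\<in>TS. u A T * v T B) = int ((p ^ k * card A + b - card (A - B)) choose s)"
        using key[OF As Bs] False qk XA unfolding c_def by simp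
      moreover obtain l where "card (A - B) mod q = l" "b - s + 1 \<le> l" "l \<le> b" using modl[OF md[OF A B ne]] by blast
      moreover have "card (A - B) \<le> card A" using finA by (simp add: card_mono)
      ultimately show ?thesis using Z1[OF p bq[unfolded qk]] s1 sb qk by simp
    qed
  qed
  have "card F \<le> card TS"
    by (rule rank_bound[OF finF finT _ diag off]) (use p in auto)
  also have "card TS = (\<Sum>i=0..s. (n - 1) choose i)" unfolding TS_def W_def by (rule card_TS)
  finally show ?thesis .
qed

end
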